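(* Let $A\in\mathbb{R}^{n\times n}$ be monotone, let $A=P_1-R_1+S_1$ be a double weak regular splitting and $A=P_2-R_2+S_2$ a double regular splitting of $A$. Suppose $1\notin\sigma(S_2P_1^{-1})$, $-1\notin\sigma(R_2P_1^{-1})$, $\widehat{A}^{-1}\geq 0$ and $\widehat{\mathcal{A}}^{-1}\geq 0$, where $\widehat{A}=(I-S_2P_1^{-1})A$ and $\widehat{\mathcal{A}}=(I+R_2P_1^{-1})A$. Let $\widehat{P}=\widehat{\mathcal{P}}=P_2$, $\widehat{R}=R_2-S_2P_1^{-1}R_1$ and $\widehat{\mathcal{R}}=R_2P_1^{-1}R_1-S_2$. If $\widehat{\mathcal{P}}^{-1}\widehat{\mathcal{R}}\geq\widehat{P}^{-1}\widehat{R}$ and $\widehat{\mathcal{P}}^{-1}\widehat{\mathcal{A}}\geq\widehat{P}^{-1}\widehat{A}$, then $\rho(\mathcal{W}_{12})\leq\rho(W_{12})<1$, where $$W_{12}=\begin{pmatrix} P_2^{-1}R_2-P_2^{-1}S_2P_1^{-1}R_1 & P_2^{-1}S_2P_1^{-1}S_1\\ I & 0\end{pmatrix},\qquad \mathcal{W}_{12}=\begin{pmatrix} P_2^{-1}R_2P_1^{-1}R_1-P_2^{-1}S_2 & -P_2^{-1}R_2P_1^{-1}S_1\\ I & 0\end{pmatrix}.$$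
   Context: Inequalities are entrywise; $\rho$ is the spectral radius, $\sigma$ the spectrum. $A$ is monotone if $A$ is nonsingular and $A^{-1}\geq 0$. A double splitting $A=P-R+S$ with $P$ nonsingular is a double regular splitting if $P^{-1}\geq0$, $R\geq0$, $S\leq0$, and a double weak regular splitting if $P^{-1}\geq 0$, $P^{-1}R\geq0$, $P^{-1}S\leq0$. *)

theory Defs
  imports "Jordan_Normal_Form.Spectral_Radius" "Jordan_Normal_Form.Gauss_Jordan_Elimination"
begin

definition minv :: "real mat \<Rightarrow> real mat" where
  "minv A = the (mat_inverse A)"

definition rspec :: "real mat \<Rightarrow> complex set" where
  "rspec A = spectrum (map_mat complex_of_real A)"

definition rrho :: "real mat \<Rightarrow> real" where
  "rrho A = spectral_radius (map_mat complex_of_real A)"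

definition monotone_mat :: "real mat \<Rightarrow> bool" where
  "monotone_mat A \<longleftrightarrow> invertible_mat A \<and> 0\<^sub>m (dim_row A) (dim_col A) \<le> minv A"

definition double_regular_splitting :: "real mat \<Rightarrow> real mat \<Rightarrow> real mat \<Rightarrow> real mat \<Rightarrow> bool" where
  "double_regular_splitting A P R S \<longleftrightarrow>
     A = P - R + S \<and> invertible_mat P \<and>
     0\<^sub>m (dim_row P) (dim_col P) \<le> minv P \<and>
     0\<^sub>m (dim_row R) (dim_col R) \<le> R \<and>
     S \<le> 0\<^sub>m (dim_row S) (dim_col S)"

definition double_weak_regular_splitting :: "real mat \<Rightarrow> real mat \<Rightarrow> real mat \<Rightarrow> real mat \<Rightarrow> bool" where
  "double_weak_regular_splitting A P R S \<longleftrightarrow>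
     A = P - R + S \<and> invertible_mat P \<and>
     0\<^sub>m (dim_row P) (dim_col P) \<le> minv P \<and>
     0\<^sub>m (dim_row P) (dim_col R) \<le> minv P * R \<and>
     minv P * S \<le> 0\<^sub>m (dim_row P) (dim_col S)"

end

theory Submission
  imports Defs
begin


declare minus_carrier_mat[simp]

definition nn :: "real mat \<Rightarrow> bool" where
  "nn B \<longleftrightarrow> (\<forall>i<dim_row B. \<forall>j<dim_col B. 0 \<le> B $$ (i,j))"

lemma inv_ex: assumes A: "A \<in> carrier_mat n n" and inv: "invertible_mat A"
  shows "\<exists>B \<in> carrier_mat n n. A * B = 1\<^sub>m n \<and> B * A = 1\<^sub>m n"
proof -
  from inv obtain B where AB: "A * B = 1\<^sub>m (dim_row A)" and BA: "B * A = 1\<^sub>m (dim_row B)"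
    unfolding invertible_mat_def inverts_mat_def by auto
  have c: "dim_col B = n" using arg_cong[OF AB, of dim_col] A by auto
  have r: "dim_row B = n" using arg_cong[OF BA, of dim_col] A by auto
  show ?thesis using AB BA A c r by (intro bexI[of _ B]) auto
qed

lemma minv_eq: assumes A: "A \<in> carrier_mat n n" and B: "B \<in> carrier_mat n n"
  and AB: "A * B = 1\<^sub>m n"
  shows "minv A = B"
proof -
  have BA: "B * A = 1\<^sub>m n" using mat_mult_left_right_inverse[OF A B AB] .
  have U: "A \<in> Units (ring_mat TYPE(real) n ())"
    unfolding Units_def ring_mat_def using A B AB BA by auto
  have "mat_inverse A \<noteq> None" using mat_inverse(1)[OF A, of "()"] U by auto
  then obtain B' where S: "mat_inverse A = Some B'" by auto
  from mat_inverse(2)[OF A S] have B'A: "B' * A = 1\<^sub>m n" and B': "B' \<in> carrier_mat n n" by auto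
  have "B' = B' * (A * B)" using AB B' by simp
  also have "\<dots> = (B' * A) * B" using A B B' by simp
  also have "\<dots> = B" using B'A B by simp
  finally show ?thesis unfolding minv_def S by simp
qed

lemma minv_props: assumes A: "A \<in> carrier_mat n n" and inv: "invertible_mat A"
  shows "minv A \<in> carrier_mat n n" "A * minv A = 1\<^sub>m n" "minv A * A = 1\<^sub>m n"
proof -
  from inv_ex[OF A inv] obtain B where B: "B \<in> carrier_mat n n" "A * B = 1\<^sub>m n" "B * A = 1\<^sub>m n" by auto
  from minv_eq[OF A B(1) B(2)] B show "minv A \<in> carrier_mat n n" "A * minv A = 1\<^sub>m n" "minv A * A = 1\<^sub>m n" by auto
qed

fun psum :: "real mat \<Rightarrow> nat \<Rightarrow> real mat" where
  "psum B 0 = 0\<^sub>m (dim_row B) (dim_row B)"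
| "psum B (Suc k) = psum B k + B ^\<^sub>m k"

lemma psum_carrier: "B \<in> carrier_mat n n \<Longrightarrow> psum B k \<in> carrier_mat n n"
  by (induct k) auto

lemma psum_index: assumes "B \<in> carrier_mat n n" "i < n" "j < n"
  shows "psum B k $$ (i,j) = (\<Sum>l<k. (B ^\<^sub>m l) $$ (i,j))"
  using assms by (induct k) (auto simp: psum_carrier)

lemma pow_comm: assumes B: "B \<in> carrier_mat n n" shows "B ^\<^sub>m k * B = B * B ^\<^sub>m k"
proof (induct k)
  case 0 then show ?case using B by simp
next
  case (Suc k)
  have "B ^\<^sub>m Suc k * B = (B ^\<^sub>m k * B) * B" by simp
  also have "\<dots> = (B * B ^\<^sub>m k) * B" using Suc by simp
  also have "\<dots> = B * (B ^\<^sub>m k * B)" using B by (simp add: assoc_mult_mat[of _ n n _ n _ n])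
  finally show ?case by simp
qed

lemma psum_mult: assumes B: "B \<in> carrier_mat n n"
  shows "psum B k * (1\<^sub>m n - B) = 1\<^sub>m n - B ^\<^sub>m k"
proof (induct k)
  case 0 then show ?case using B by (intro eq_matI) auto
next
  case (Suc k)
  have P: "psum B k \<in> carrier_mat n n" using psum_carrier[OF B] .
  have Bk: "B ^\<^sub>m k \<in> carrier_mat n n" using B by simp
  have "psum B (Suc k) * (1\<^sub>m n - B) = psum B k * (1\<^sub>m n - B) + B ^\<^sub>m k * (1\<^sub>m n - B)"
    using add_mult_distrib_mat[OF P Bk, of "1\<^sub>m n - B" n] B by auto
  also have "B ^\<^sub>m k * (1\<^sub>m n - B) = B ^\<^sub>m k - B ^\<^sub>m Suc k"
    using Bk B by (simp add: mult_minus_distrib_mat[of _ n n _ n])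
  finally show ?case unfolding Suc using Bk B by (intro eq_matI) auto
qed

lemma left_inv_psum: assumes B: "B \<in> carrier_mat n n" and N: "N \<in> carrier_mat n n"
  and NB: "N * (1\<^sub>m n - B) = 1\<^sub>m n"
  shows "N = psum B k + N * B ^\<^sub>m k"
proof -
  have "N * 1\<^sub>m n - N * B = 1\<^sub>m n" using NB N B by (simp add: mult_minus_distrib_mat[of _ n n _ n])
  moreover have "N = (N * 1\<^sub>m n - N * B) + N * B" using N B by (intro eq_matI) auto
  ultimately have N1: "N = 1\<^sub>m n + N * B" by simp
  show ?thesis
  proof (induct k)
    case 0 then show ?case using N B by (intro eq_matI) auto
  next
    case (Suc k)
    have Bk: "B ^\<^sub>m k \<in> carrier_mat n n" using B by simp
    have "N * B ^\<^sub>m k = (1\<^sub>m n + N * B) * B ^\<^sub>m k" using N1 by simp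
    also have "\<dots> = B ^\<^sub>m k + N * B * B ^\<^sub>m k" using N B Bk
      add_mult_distrib_mat[of "1\<^sub>m n" n n "N * B" "B ^\<^sub>m k" n] by simp
    also have "N * B * B ^\<^sub>m k = N * (B * B ^\<^sub>m k)" using assoc_mult_mat[OF N B Bk] .
    also have "B * B ^\<^sub>m k = B ^\<^sub>m Suc k" using pow_comm[OF B, of k] by simp
    finally have e: "N * B ^\<^sub>m k = B ^\<^sub>m k + N * B ^\<^sub>m Suc k" .
    have P: "psum B k \<in> carrier_mat n n" using psum_carrier[OF B] .
    have "N = psum B k + (B ^\<^sub>m k + N * B ^\<^sub>m Suc k)" using Suc e by simp
    also have "\<dots> = psum B (Suc k) + N * B ^\<^sub>m Suc k" using P Bk N B by (intro eq_matI) auto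
    finally show ?case .
  qed
qed



lemma nn_mult: assumes A: "A \<in> carrier_mat n n" and B: "B \<in> carrier_mat n n"
  and "nn A" "nn B" shows "nn (A * B)"
  using assms unfolding nn_def
  by (auto simp: scalar_prod_def intro!: sum_nonneg mult_nonneg_nonneg)

lemma nn_add: assumes "A \<in> carrier_mat n n" "B \<in> carrier_mat n n" "nn A" "nn B" shows "nn (A + B)"
  using assms unfolding nn_def by auto

lemma nn_smult: assumes "0 \<le> c" "nn A" shows "nn (c \<cdot>\<^sub>m A)"
  using assms unfolding nn_def by auto

lemma nn_one: "nn (1\<^sub>m n)" unfolding nn_def by auto
lemma nn_zero: "nn (0\<^sub>m n m)" unfolding nn_def by auto

lemma nn_pow: assumes B: "B \<in> carrier_mat n n" "nn B" shows "nn (B ^\<^sub>m k)"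
proof (induct k)
  case 0 then show ?case using nn_one by simp
next
  case (Suc k) then show ?case using nn_mult[of "B ^\<^sub>m k" n B] B by simp
qed

lemma nn_psum: assumes B: "B \<in> carrier_mat n n" "nn B" shows "nn (psum B k)"
proof (induct k)
  case 0 then show ?case using nn_zero by simp
next
  case (Suc k) then show ?case using nn_add[of "psum B k" n "B ^\<^sub>m k"] nn_pow[OF B] B psum_carrier[OF B(1)] by simp
qed

lemma mono_mult: assumes A: "A \<in> carrier_mat n n" and A': "A' \<in> carrier_mat n n"
  and B: "B \<in> carrier_mat n n" and B': "B' \<in> carrier_mat n n"
  and "nn A" "nn B" "A \<le> A'" "B \<le> B'"
  shows "A * B \<le> A' * B'"
  using assms unfolding nn_def less_eq_mat_def
  apply (auto simp: scalar_prod_def intro!: sum_mono mult_mono)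
  by (meson order.trans)

lemma pow_mono: assumes B: "B \<in> carrier_mat n n" and C: "C \<in> carrier_mat n n"
  and "nn B" "B \<le> C" shows "B ^\<^sub>m k \<le> C ^\<^sub>m k"
proof (induct k)
  case 0 then show ?case using B C by (simp add: less_eq_mat_def)
next
  case (Suc k) then show ?case using mono_mult[of "B ^\<^sub>m k" n "C ^\<^sub>m k" B C] nn_pow assms by simp
qed

lemma rspec_ev: assumes B: "B \<in> carrier_mat n n" and v: "v \<in> carrier_vec n" and v0: "v \<noteq> 0\<^sub>v n"
  and Bv: "B *\<^sub>v v = a \<cdot>\<^sub>v v"
  shows "complex_of_real a \<in> rspec B"
proof -
  let ?v = "map_vec complex_of_real v"
  have "map_mat complex_of_real B *\<^sub>v ?v = map_vec complex_of_real (B *\<^sub>v v)"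
    using of_real_hom.mult_mat_vec_hom[OF B v] by (rule sym)
  also have "\<dots> = complex_of_real a \<cdot>\<^sub>v ?v" unfolding Bv by (intro eq_vecI) auto
  finally have e: "map_mat complex_of_real B *\<^sub>v ?v = complex_of_real a \<cdot>\<^sub>v ?v" .
  have v0': "?v \<noteq> 0\<^sub>v n"
  proof
    assume "?v = 0\<^sub>v n"
    hence "v = 0\<^sub>v n" using v by (intro eq_vecI) (auto dest!: arg_cong[of _ _ "\<lambda>x. x $ _"])
    with v0 show False by simp
  qed
  have "eigenvector (map_mat complex_of_real B) ?v (complex_of_real a)"
    unfolding eigenvector_def using e v0' v B by simp
  then show ?thesis unfolding rspec_def spectrum_def eigenvalue_def by auto
qed

lemma rrho_max: assumes B: "B \<in> carrier_mat n n" and n: "0 < n"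
  shows "rrho B \<in> norm ` rspec B" "k \<in> rspec B \<Longrightarrow> norm k \<le> rrho B" "0 \<le> rrho B"
proof -
  have Bc: "map_mat complex_of_real B \<in> carrier_mat n n" using B by simp
  from spectral_radius_mem_max[OF Bc n]
  show "rrho B \<in> norm ` rspec B" "k \<in> rspec B \<Longrightarrow> norm k \<le> rrho B"
    unfolding rrho_def rspec_def by auto
  then show "0 \<le> rrho B" by auto
qed

lemma G: assumes B: "B \<in> carrier_mat n n" and n: "0 < n" and nB: "nn B"
  and bnd: "\<forall>i<n. \<forall>j<n. \<exists>C. \<forall>k. psum B k $$ (i,j) \<le> C"
  shows "rrho B < 1"
proof (rule ccontr)
  assume "\<not> rrho B < 1"
  hence r1: "1 \<le> rrho B" by simp
  from rrho_max(1)[OF B n] obtain mu where mu: "mu \<in> rspec B" and nmu: "norm mu = rrho B" by auto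
  let ?Bc = "map_mat complex_of_real B"
  have Bc: "?Bc \<in> carrier_mat n n" using B by simp
  from mu obtain v where ev: "eigenvector ?Bc v mu"
    unfolding rspec_def spectrum_def eigenvalue_def by auto
  hence v: "v \<in> carrier_vec n" and v0: "v \<noteq> 0\<^sub>v n" unfolding eigenvector_def using B by auto
  obtain i where i: "i < n" and vi: "v $ i \<noteq> 0"
    using v v0 by (metis eq_vecI carrier_vecD index_zero_vec(1) index_zero_vec(2))
  define C where "C = (\<lambda>j. SOME C. \<forall>k. psum B k $$ (i,j) \<le> C)"
  have C: "psum B k $$ (i,j) \<le> C j" if "j < n" for j k
    using someI_ex[OF bnd[rule_format, OF i that]] unfolding C_def by blast
  define D where "D = (\<Sum>j\<in>{0..<n}. C j * norm (v $ j))"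
  have step: "norm (v $ i) \<le> (\<Sum>j\<in>{0..<n}. (B ^\<^sub>m l) $$ (i,j) * norm (v $ j))" for l
  proof -
    have "?Bc ^\<^sub>m l *\<^sub>v v = mu ^ l \<cdot>\<^sub>v v" using eigenvector_pow[OF Bc ev] .
    moreover have "?Bc ^\<^sub>m l = map_mat complex_of_real (B ^\<^sub>m l)"
      using of_real_hom.mat_hom_pow[OF B] by (rule sym)
    ultimately have "(map_mat complex_of_real (B ^\<^sub>m l) *\<^sub>v v) $ i = mu ^ l * v $ i"
      using v i by simp
    hence eq: "(\<Sum>j\<in>{0..<n}. complex_of_real ((B ^\<^sub>m l) $$ (i,j)) * v $ j) = mu ^ l * v $ i"
      using v i B by (simp add: scalar_prod_def)
    have "norm (v $ i) \<le> norm (mu ^ l * v $ i)"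
      using r1 nmu by (simp add: norm_mult norm_power one_le_power mult_le_cancel_right1)
    also have "\<dots> = norm (\<Sum>j\<in>{0..<n}. complex_of_real ((B ^\<^sub>m l) $$ (i,j)) * v $ j)" using eq by simp
    also have "\<dots> \<le> (\<Sum>j\<in>{0..<n}. norm (complex_of_real ((B ^\<^sub>m l) $$ (i,j)) * v $ j))"
      by (rule norm_sum)
    also have "\<dots> = (\<Sum>j\<in>{0..<n}. (B ^\<^sub>m l) $$ (i,j) * norm (v $ j))"
    proof (rule sum.cong)
      fix j assume j: "j \<in> {0..<n}"
      have "0 \<le> (B ^\<^sub>m l) $$ (i,j)" using nn_pow[OF B nB, of l] i j B unfolding nn_def by auto
      then show "norm (complex_of_real ((B ^\<^sub>m l) $$ (i,j)) * v $ j) = (B ^\<^sub>m l) $$ (i,j) * norm (v $ j)"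
        by (simp add: norm_mult)
    qed simp
    finally show ?thesis .
  qed
  have key: "real k * norm (v $ i) \<le> D" for k
  proof -
    have "real k * norm (v $ i) = (\<Sum>l<k. norm (v $ i))" by simp
    also have "\<dots> \<le> (\<Sum>l<k. \<Sum>j\<in>{0..<n}. (B ^\<^sub>m l) $$ (i,j) * norm (v $ j))"
      by (rule sum_mono) (rule step)
    also have "\<dots> = (\<Sum>j\<in>{0..<n}. (\<Sum>l<k. (B ^\<^sub>m l) $$ (i,j)) * norm (v $ j))"
      by (subst sum.swap) (simp add: sum_distrib_right)
    also have "\<dots> = (\<Sum>j\<in>{0..<n}. psum B k $$ (i,j) * norm (v $ j))"
      using psum_index[OF B i] by simp
    also have "\<dots> \<le> D" unfolding D_def
      by (rule sum_mono) (auto intro: mult_right_mono C)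
    finally show ?thesis .
  qed
  have pos: "0 < norm (v $ i)" using vi by simp
  define k where "k = nat (ceiling (D / norm (v $ i))) + 1"
  have "D / norm (v $ i) < real k" unfolding k_def by linarith
  hence "D < real k * norm (v $ i)" using pos by (simp add: divide_less_eq)
  with key[of k] show False by simp
qed



lemma idx_add: "A \<in> carrier_mat n m \<Longrightarrow> B \<in> carrier_mat n m \<Longrightarrow> i < n \<Longrightarrow> j < m \<Longrightarrow>
  (A + B) $$ (i,j) = A $$ (i,j) + B $$ (i,j)" by auto

lemma smult_mult_vec: assumes M: "(M :: complex mat) \<in> carrier_mat n n" and v: "v \<in> carrier_vec n"
  shows "(a \<cdot>\<^sub>m M) *\<^sub>v v = a \<cdot>\<^sub>v (M *\<^sub>v v)"
  using M v by (intro eq_vecI) (auto simp: scalar_prod_def sum_distrib_left mult.assoc)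

lemma ev_smult: assumes M: "(M :: complex mat) \<in> carrier_mat n n" and ev: "eigenvector M v k"
  shows "eigenvector (a \<cdot>\<^sub>m M) v (a * k)"
proof -
  from ev M have v: "v \<in> carrier_vec n" "v \<noteq> 0\<^sub>v n" and Mv: "M *\<^sub>v v = k \<cdot>\<^sub>v v"
    unfolding eigenvector_def by auto
  have "(a \<cdot>\<^sub>m M) *\<^sub>v v = (a * k) \<cdot>\<^sub>v v" unfolding smult_mult_vec[OF M v(1)] Mv
    using v by (intro eq_vecI) auto
  then show ?thesis using v M unfolding eigenvector_def by auto
qed

lemma rspec_smult: assumes B: "B \<in> carrier_mat n n" and k: "k \<in> rspec B"
  shows "complex_of_real c * k \<in> rspec (c \<cdot>\<^sub>m B)"
proof -
  have e: "map_mat complex_of_real (c \<cdot>\<^sub>m B) = complex_of_real c \<cdot>\<^sub>m map_mat complex_of_real B"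
    using B by (intro eq_matI) auto
  from k obtain v where "eigenvector (map_mat complex_of_real B) v k"
    unfolding rspec_def spectrum_def eigenvalue_def by auto
  from ev_smult[OF _ this, of n] B
  show ?thesis unfolding rspec_def spectrum_def eigenvalue_def e by auto
qed

lemma rrho_smult: assumes B: "B \<in> carrier_mat n n" and n: "0 < n" and c: "0 < c"
  shows "rrho (c \<cdot>\<^sub>m B) = c * rrho B"
proof -
  have cB: "c \<cdot>\<^sub>m B \<in> carrier_mat n n" using B by simp
  from rrho_max(1)[OF B n] obtain k where k: "k \<in> rspec B" "norm k = rrho B" by auto
  from rrho_max(2)[OF cB n rspec_smult[OF B k(1), of c]]
  have 1: "c * rrho B \<le> rrho (c \<cdot>\<^sub>m B)" using c k(2) by (simp add: norm_mult)
  from rrho_max(1)[OF cB n] obtain k' where k': "k' \<in> rspec (c \<cdot>\<^sub>m B)" "norm k' = rrho (c \<cdot>\<^sub>m B)" by auto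
  have e: "(1/c) \<cdot>\<^sub>m (c \<cdot>\<^sub>m B) = B" using B c by (intro eq_matI) auto
  from rrho_max(2)[OF B n rspec_smult[OF cB k'(1), of "1/c", unfolded e]]
  have "rrho (c \<cdot>\<^sub>m B) / c \<le> rrho B" using c k'(2) by (simp add: norm_mult norm_divide)
  hence 2: "rrho (c \<cdot>\<^sub>m B) \<le> c * rrho B" using c by (simp add: divide_le_eq mult.commute)
  from 1 2 show ?thesis by simp
qed

lemma pow_smult: assumes A: "(A :: real mat) \<in> carrier_mat n n"
  shows "(c \<cdot>\<^sub>m A) ^\<^sub>m k = c ^ k \<cdot>\<^sub>m (A ^\<^sub>m k)"
proof (induct k)
  case 0 then show ?case using A by (intro eq_matI) auto
next
  case (Suc k)
  have Ak: "A ^\<^sub>m k \<in> carrier_mat n n" using A by simp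
  have "(c \<cdot>\<^sub>m A) ^\<^sub>m Suc k = (c ^ k \<cdot>\<^sub>m (A ^\<^sub>m k)) * (c \<cdot>\<^sub>m A)" using Suc by simp
  also have "\<dots> = c ^ k \<cdot>\<^sub>m ((A ^\<^sub>m k) * (c \<cdot>\<^sub>m A))" using mult_smult_assoc_mat[OF Ak, of "c \<cdot>\<^sub>m A" n] A by simp
  also have "(A ^\<^sub>m k) * (c \<cdot>\<^sub>m A) = c \<cdot>\<^sub>m (A ^\<^sub>m k * A)" using mult_smult_distrib[OF Ak A] .
  finally show ?case using A by (intro eq_matI) auto
qed

lemma H0: assumes B: "B \<in> carrier_mat n n" and n: "0 < n" and r: "rrho B < 1"
  shows "\<exists>c s. 0 < s \<and> s < 1 \<and> (\<forall>k i j. i < n \<longrightarrow> j < n \<longrightarrow> \<bar>(B ^\<^sub>m k) $$ (i,j)\<bar> \<le> c * s ^ k)"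
proof -
  define s where "s = (rrho B + 1) / 2"
  have r0: "0 \<le> rrho B" using rrho_max(3)[OF B n] .
  have s: "0 < s" "s < 1" "rrho B < s" using r r0 unfolding s_def by auto
  define B' where "B' = (1/s) \<cdot>\<^sub>m B"
  have B': "B' \<in> carrier_mat n n" unfolding B'_def using B by simp
  have "rrho B' = rrho B / s" unfolding B'_def using rrho_smult[OF B n, of "1/s"] s by simp
  hence "rrho B' < 1" using s by (simp add: divide_less_eq)
  hence "spectral_radius (map_mat complex_of_real B') < 1" unfolding rrho_def .
  from spectral_radius_jnf_norm_bound_less_1_upper_triangular[OF _ this] B'
  obtain c where c: "\<And>k. norm_bound (map_mat complex_of_real B' ^\<^sub>m k) c" by force
  show ?thesis
  proof (intro exI conjI allI impI)
    fix k i j assume i: "i < n" and j: "j < n"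
    have "map_mat complex_of_real B' ^\<^sub>m k = map_mat complex_of_real (B' ^\<^sub>m k)"
      using of_real_hom.mat_hom_pow[OF B'] by (rule sym)
    also have "B' ^\<^sub>m k = (1/s) ^ k \<cdot>\<^sub>m (B ^\<^sub>m k)" unfolding B'_def using pow_smult[OF B] .
    finally have "norm (complex_of_real ((1/s) ^ k * (B ^\<^sub>m k) $$ (i,j))) \<le> c"
      using c[of k] i j B unfolding norm_bound_def by auto
    hence "\<bar>(1/s) ^ k * (B ^\<^sub>m k) $$ (i,j)\<bar> \<le> c" by (simp only: norm_of_real)
    hence "(1/s) ^ k * \<bar>(B ^\<^sub>m k) $$ (i,j)\<bar> \<le> c" using s by (simp add: abs_mult)
    hence "s ^ k * ((1/s) ^ k * \<bar>(B ^\<^sub>m k) $$ (i,j)\<bar>) \<le> s ^ k * c"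
      using s by (intro mult_left_mono) auto
    moreover have "s ^ k * (1/s) ^ k = 1" using s by (simp add: power_one_over field_simps)
    ultimately show "\<bar>(B ^\<^sub>m k) $$ (i,j)\<bar> \<le> c * s ^ k" by (simp add: mult.assoc[symmetric] mult.commute)
  qed (use s in auto)
qed

lemma abs_bound_aux: assumes "\<bar>y\<bar> \<le> b" shows "-(\<bar>x\<bar> * b) \<le> (x::real) * y"
proof -
  have "\<bar>x*y\<bar> \<le> \<bar>x\<bar>*b" using assms by (simp add: abs_mult mult_left_mono)
  then show ?thesis by (metis abs_ge_minus_self minus_le_iff order_trans)
qed

lemma H2: assumes B: "B \<in> carrier_mat n n" and n: "0 < n" and nB: "nn B" and r: "rrho B < 1"
  shows "\<exists>N \<in> carrier_mat n n. N * (1\<^sub>m n - B) = 1\<^sub>m n \<and> (1\<^sub>m n - B) * N = 1\<^sub>m n \<and> nn N"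
proof -
  have IB: "1\<^sub>m n - B \<in> carrier_mat n n" using B by simp
  have "det (1\<^sub>m n - B) \<noteq> 0"
  proof
    assume "det (1\<^sub>m n - B) = 0"
    from this[unfolded det_0_iff_vec_prod_zero_field[OF IB]] obtain v where
      v: "v \<in> carrier_vec n" "v \<noteq> 0\<^sub>v n" and e: "(1\<^sub>m n - B) *\<^sub>v v = 0\<^sub>v n" by auto
    have "(1\<^sub>m n - B) *\<^sub>v v = v - B *\<^sub>v v"
      using minus_mult_distrib_mat_vec[OF one_carrier_mat B v(1)] v by simp
    with e have z: "v - B *\<^sub>v v = 0\<^sub>v n" by simp
    have zi: "(v - B *\<^sub>v v) $ i = 0" if "i < n" for i using z that by simp
    have "B *\<^sub>v v = 1 \<cdot>\<^sub>v v" using v B zi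
      by (intro eq_vecI) auto
    from rspec_ev[OF B v this] rrho_max(2)[OF B n] r show False by force
  qed
  from det_non_zero_imp_unit[OF IB this, of "()"]
  obtain N where N: "N \<in> carrier_mat n n" "(1\<^sub>m n - B) * N = 1\<^sub>m n" "N * (1\<^sub>m n - B) = 1\<^sub>m n"
    unfolding Units_def ring_mat_def by auto
  from H0[OF B n r] obtain c s where s: "0 < s" "s < 1"
    and cs: "\<And>k i j. i < n \<Longrightarrow> j < n \<Longrightarrow> \<bar>(B ^\<^sub>m k) $$ (i,j)\<bar> \<le> c * s ^ k" by blast
  have "nn N" unfolding nn_def
  proof (intro allI impI)
    fix i j assume i: "i < dim_row N" and j: "j < dim_col N"
    hence i: "i < n" and j: "j < n" using N by auto
    define D where "D = (\<Sum>l\<in>{0..<n}. \<bar>N $$ (i,l)\<bar> * c)"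
    have low: "- (D * s ^ k) \<le> N $$ (i,j)" for k
    proof -
      have Bk: "B ^\<^sub>m k \<in> carrier_mat n n" using B by simp
      have eq: "N $$ (i,j) = psum B k $$ (i,j) + (N * B ^\<^sub>m k) $$ (i,j)"
        using arg_cong[OF left_inv_psum[OF B N(1) N(3), of k], of "\<lambda>M. M $$ (i,j)"]
          idx_add[OF psum_carrier[OF B, of k] mult_carrier_mat[OF N(1) Bk] i j] by simp
      have p: "0 \<le> psum B k $$ (i,j)" using nn_psum[OF B nB, of k] i j psum_carrier[OF B, of k] unfolding nn_def by auto
      have "(N * B ^\<^sub>m k) $$ (i,j) = (\<Sum>l\<in>{0..<n}. N $$ (i,l) * (B ^\<^sub>m k) $$ (l,j))"
        using i j N(1) Bk B by (simp add: scalar_prod_def)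
      also have "\<dots> \<ge> (\<Sum>l\<in>{0..<n}. -(\<bar>N $$ (i,l)\<bar> * (c * s ^ k)))"
        by (rule sum_mono, rule abs_bound_aux, rule cs) (use j in auto)
      finally have "-(D * s ^ k) \<le> (N * B ^\<^sub>m k) $$ (i,j)"
        unfolding D_def by (simp add: sum_negf sum_distrib_right mult.assoc)
      with eq p show ?thesis by linarith
    qed
    show "0 \<le> N $$ (i,j)"
    proof (rule ccontr)
      assume neg: "\<not> 0 \<le> N $$ (i,j)"
      have D0: "0 < D" using low[of 0] neg by simp
      have "0 < - N $$ (i,j) / D" using neg D0 by (simp add: divide_neg_pos)
      from real_arch_pow_inv[OF this s(2)]
      obtain k where "s ^ k < - N $$ (i,j) / D" by blast
      hence "D * s ^ k < - N $$ (i,j)" using D0 by (metis minus_divide_left pos_less_divide_eq mult.commute)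
      with low[of k] show False by simp
    qed
  qed
  with N show ?thesis by blast
qed

lemma psum_le_N: assumes B: "B \<in> carrier_mat n n" and N: "N \<in> carrier_mat n n"
  and nB: "nn B" and nN: "nn N" and NB: "N * (1\<^sub>m n - B) = 1\<^sub>m n" and i: "i < n" and j: "j < n"
  shows "psum B k $$ (i,j) \<le> N $$ (i,j)"
proof -
  have Bk: "B ^\<^sub>m k \<in> carrier_mat n n" using B by simp
  have eq: "N $$ (i,j) = psum B k $$ (i,j) + (N * B ^\<^sub>m k) $$ (i,j)"
    using arg_cong[OF left_inv_psum[OF B N NB, of k], of "\<lambda>M. M $$ (i,j)"]
      idx_add[OF psum_carrier[OF B, of k] mult_carrier_mat[OF N Bk] i j] by simp
  have "0 \<le> (N * B ^\<^sub>m k) $$ (i,j)" using nn_mult[OF N Bk nN nn_pow[OF B nB]] i j N Bk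
    unfolding nn_def by auto
  with eq show ?thesis by linarith
qed

lemma G2: assumes B: "B \<in> carrier_mat n n" and n: "0 < n" and N: "N \<in> carrier_mat n n"
  and nB: "nn B" and nN: "nn N" and NB: "N * (1\<^sub>m n - B) = 1\<^sub>m n"
  shows "rrho B < 1"
  by (rule G[OF B n nB]) (use psum_le_N[OF B N nB nN NB] in blast)

lemma Mono: assumes B: "B \<in> carrier_mat n n" and C: "C \<in> carrier_mat n n" and n: "0 < n"
  and nB: "nn B" and BC: "B \<le> C" and r: "rrho C < 1"
  shows "rrho B < 1"
proof -
  have nC: "nn C" using nB BC unfolding nn_def less_eq_mat_def by auto (metis order.trans)
  from H2[OF C n nC r] obtain K where K: "K \<in> carrier_mat n n" "K * (1\<^sub>m n - C) = 1\<^sub>m n" "nn K" by blast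
  show ?thesis
  proof (rule G[OF B n nB], intro allI impI exI)
    fix i j k assume i: "i < n" and j: "j < n"
    have "psum B k $$ (i,j) \<le> psum C k $$ (i,j)"
      unfolding psum_index[OF B i j] psum_index[OF C i j]
      by (rule sum_mono) (use pow_mono[OF B C nB BC] i j B C in \<open>auto simp: less_eq_mat_def\<close>)
    also have "\<dots> \<le> K $$ (i,j)" using psum_le_N[OF C K(1) nC K(3) K(2) i j] .
    finally show "psum B k $$ (i,j) \<le> K $$ (i,j)" .
  qed
qed

lemma Varga: assumes B: "B \<in> carrier_mat n n" and n: "0 < n" and nB: "nn B"
  and Q: "Q \<in> carrier_mat n n" and nQ: "nn Q" and Qi: "Qi \<in> carrier_mat n n" and QQi: "Q * Qi = 1\<^sub>m n"
  and X: "\<And>k i l. i < n \<Longrightarrow> l < n \<Longrightarrow> (psum B k * Q) $$ (i,l) \<le> X $$ (i,l)"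
  shows "rrho B < 1"
proof (rule G[OF B n nB], intro allI impI)
  fix i m assume i: "i < n" and m: "m < n"
  have "\<exists>l<n. 0 < Q $$ (m,l)"
  proof (rule ccontr)
    assume na: "\<not> (\<exists>l<n. 0 < Q $$ (m,l))"
    have z: "Q $$ (m,l) = 0" if l: "l < n" for l
    proof -
      have "0 \<le> Q $$ (m,l)" using nQ Q m l unfolding nn_def by auto
      then show ?thesis using na l by auto
    qed
    have "(Q * Qi) $$ (m,m) = (\<Sum>l\<in>{0..<n}. Q $$ (m,l) * Qi $$ (l,m))"
      using m Q Qi by (simp add: scalar_prod_def)
    also have "\<dots> = 0" using z by simp
    finally show False using QQi m by simp
  qed
  then obtain l where l: "l < n" and pos: "0 < Q $$ (m,l)" by auto
  show "\<exists>C. \<forall>k. psum B k $$ (i,m) \<le> C"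
  proof (intro exI allI)
    fix k
    have P: "psum B k \<in> carrier_mat n n" using psum_carrier[OF B] .
    have "psum B k $$ (i,m) * Q $$ (m,l) \<le> (\<Sum>p\<in>{0..<n}. psum B k $$ (i,p) * Q $$ (p,l))"
      by (rule member_le_sum) (use m nn_psum[OF B nB, of k] nQ P Q i l in \<open>auto simp: nn_def\<close>)
    also have "\<dots> = (psum B k * Q) $$ (i,l)" using P Q i l by (simp add: scalar_prod_def)
    also have "\<dots> \<le> X $$ (i,l)" using X[OF i l] .
    finally show "psum B k $$ (i,m) \<le> X $$ (i,l) / Q $$ (m,l)" using pos by (simp add: le_divide_eq)
  qed
qed



lemma pm1: assumes X: "(X::real mat) \<in> carrier_mat n n" and T: "T \<in> carrier_mat n n"
  shows "X * (1\<^sub>m n - T) = X - X * T"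
  using mult_minus_distrib_mat[OF X one_carrier_mat T] X by simp

lemma pm2: assumes Y: "(Y::real mat) \<in> carrier_mat n n"
  shows "Y * (- (c \<cdot>\<^sub>m 1\<^sub>m n)) = - (c \<cdot>\<^sub>m Y)"
  using mult_smult_distrib[OF Y one_carrier_mat, of c] Y by simp

lemma pm3: assumes X: "(X::real mat) \<in> carrier_mat n n" and U: "U \<in> carrier_mat n n"
  shows "X * (- U) = - (X * U)"
  using X U by (intro uminus_mult_right_mat) auto

lemma pe: assumes X: "(X::real mat) \<in> carrier_mat n n" and T: "T \<in> carrier_mat n n"
  and U: "U \<in> carrier_mat n n"
  shows "X * (1\<^sub>m n - (T + c \<cdot>\<^sub>m U)) = X - (X * T + c \<cdot>\<^sub>m (X * U))"
proof -
  have TU: "T + c \<cdot>\<^sub>m U \<in> carrier_mat n n" using T U by simp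
  have "X * (1\<^sub>m n - (T + c \<cdot>\<^sub>m U)) = X * 1\<^sub>m n - X * (T + c \<cdot>\<^sub>m U)"
    using mult_minus_distrib_mat[OF X one_carrier_mat TU] .
  also have "X * (T + c \<cdot>\<^sub>m U) = X * T + X * (c \<cdot>\<^sub>m U)"
    using mult_add_distrib_mat[OF X T] U by simp
  also have "X * (c \<cdot>\<^sub>m U) = c \<cdot>\<^sub>m (X * U)" using mult_smult_distrib[OF X U] .
  finally show ?thesis using X by simp
qed

lemma IW: assumes T: "(T::real mat) \<in> carrier_mat n n" and U: "U \<in> carrier_mat n n"
  shows "1\<^sub>m (n+n) - four_block_mat T U (c \<cdot>\<^sub>m 1\<^sub>m n) (0\<^sub>m n n)
    = four_block_mat (1\<^sub>m n - T) (- U) (- (c \<cdot>\<^sub>m 1\<^sub>m n)) (1\<^sub>m n)"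
  using T U by (intro eq_matI) auto

lemma fb_eq: assumes A: "A \<in> carrier_mat n1 m1" "A' \<in> carrier_mat n1 m1"
  and B: "B \<in> carrier_mat n1 m2" "B' \<in> carrier_mat n1 m2"
  and C: "C \<in> carrier_mat n2 m1" "C' \<in> carrier_mat n2 m1"
  and D: "D \<in> carrier_mat n2 m2" "D' \<in> carrier_mat n2 m2"
  and eq: "four_block_mat A B C D = four_block_mat A' B' C' D'"
  shows "A = A'" "B = B'"
proof -
  show "A = A'"
  proof (rule eq_matI)
    fix i j assume "i < dim_row A'" "j < dim_col A'"
    with arg_cong[OF eq, of "\<lambda>M. M $$ (i,j)"] A B C D show "A $$ (i,j) = A' $$ (i,j)" by auto
  qed (use A in auto)
  show "B = B'"
  proof (rule eq_matI)
    fix i j assume "i < dim_row B'" "j < dim_col B'"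
    with arg_cong[OF eq, of "\<lambda>M. M $$ (i,m1 + j)"] A B C D show "B $$ (i,j) = B' $$ (i,j)" by auto
  qed (use B in auto)
qed

lemma nn_fb: assumes "A \<in> carrier_mat n n" "B \<in> carrier_mat n n" "C \<in> carrier_mat n n" "D \<in> carrier_mat n n"
  and "nn A" "nn B" "nn C" "nn D"
  shows "nn (four_block_mat A B C D)"
  using assms unfolding nn_def by auto

lemma BL2: assumes T: "(T::real mat) \<in> carrier_mat n n" and U: "U \<in> carrier_mat n n"
  and K: "K \<in> carrier_mat n n" and KB: "K * (1\<^sub>m n - (T + c \<cdot>\<^sub>m U)) = 1\<^sub>m n"
  and nK: "nn K" and nU: "nn U" and c: "0 \<le> c"
  shows "\<exists>N \<in> carrier_mat (n+n) (n+n). nn N \<and>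
    N * (1\<^sub>m (n+n) - four_block_mat T U (c \<cdot>\<^sub>m 1\<^sub>m n) (0\<^sub>m n n)) = 1\<^sub>m (n+n)"
proof -
  define KT where "KT = K * T"
  define KU where "KU = K * U"
  have KT: "KT \<in> carrier_mat n n" and KU: "KU \<in> carrier_mat n n" unfolding KT_def KU_def using K T U by auto
  have H: "K - (KT + c \<cdot>\<^sub>m KU) = 1\<^sub>m n" using KB pe[OF K T U, of c] unfolding KT_def KU_def by simp
  have Hi: "K $$ (i,j) - (KT $$ (i,j) + c * KU $$ (i,j)) = (if i = j then 1 else 0)" if "i < n" "j < n" for i j
    using arg_cong[OF H, of "\<lambda>M. M $$ (i,j)"] that K KT KU by auto
  define N where "N = four_block_mat K KU (c \<cdot>\<^sub>m K) (1\<^sub>m n + c \<cdot>\<^sub>m KU)"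
  have Nc: "N \<in> carrier_mat (n+n) (n+n)" unfolding N_def using K KU by auto
  have nKU: "nn KU" unfolding KU_def using nn_mult[OF K U nK nU] .
  have nN: "nn N" unfolding N_def
    by (rule nn_fb[of _ n]) (use K KU nK nKU c nn_smult nn_add[OF one_carrier_mat _ nn_one] in auto)
  have p1: "K * (1\<^sub>m n - T) = K - KT" unfolding KT_def using pm1[OF K T] .
  have p2: "KU * (- (c \<cdot>\<^sub>m 1\<^sub>m n)) = - (c \<cdot>\<^sub>m KU)" using pm2[OF KU] .
  have p3: "K * (- U) = - KU" unfolding KU_def by (rule pm3[OF K U])
  have p4: "KU * 1\<^sub>m n = KU" using KU by simp
  have p5: "(c \<cdot>\<^sub>m K) * (1\<^sub>m n - T) = c \<cdot>\<^sub>m (K - KT)"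
    using mult_smult_assoc_mat[OF K, of "1\<^sub>m n - T" n c] p1 T by simp
  have p6: "(1\<^sub>m n + c \<cdot>\<^sub>m KU) * (- (c \<cdot>\<^sub>m 1\<^sub>m n)) = - (c \<cdot>\<^sub>m (1\<^sub>m n + c \<cdot>\<^sub>m KU))"
    using pm2[of "1\<^sub>m n + c \<cdot>\<^sub>m KU" n c] KU by simp
  have p7: "(c \<cdot>\<^sub>m K) * (- U) = - (c \<cdot>\<^sub>m KU)"
    using mult_smult_assoc_mat[OF K U, of c] pm3[of "c \<cdot>\<^sub>m K" n U] K U unfolding KU_def by simp
  have p8: "(1\<^sub>m n + c \<cdot>\<^sub>m KU) * 1\<^sub>m n = 1\<^sub>m n + c \<cdot>\<^sub>m KU" using KU by simp
  have "N * (1\<^sub>m (n+n) - four_block_mat T U (c \<cdot>\<^sub>m 1\<^sub>m n) (0\<^sub>m n n))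
     = N * four_block_mat (1\<^sub>m n - T) (- U) (- (c \<cdot>\<^sub>m 1\<^sub>m n)) (1\<^sub>m n)" using IW[OF T U] by simp
  also have "\<dots> = four_block_mat (K * (1\<^sub>m n - T) + KU * (- (c \<cdot>\<^sub>m 1\<^sub>m n))) (K * (- U) + KU * 1\<^sub>m n)
     ((c \<cdot>\<^sub>m K) * (1\<^sub>m n - T) + (1\<^sub>m n + c \<cdot>\<^sub>m KU) * (- (c \<cdot>\<^sub>m 1\<^sub>m n)))
     ((c \<cdot>\<^sub>m K) * (- U) + (1\<^sub>m n + c \<cdot>\<^sub>m KU) * 1\<^sub>m n)"
    unfolding N_def by (rule mult_four_block_mat) (use K KU T U in auto)
  also have "\<dots> = four_block_mat (1\<^sub>m n) (0\<^sub>m n n) (0\<^sub>m n n) (1\<^sub>m n)"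
    unfolding p1 p2 p3 p4 p5 p6 p7 p8
  proof (rule cong_four_block_mat)
    show "K - KT + - (c \<cdot>\<^sub>m KU) = 1\<^sub>m n" using K KT KU Hi by (intro eq_matI) (auto simp: algebra_simps)
    show "- KU + KU = 0\<^sub>m n n" using KU by (intro eq_matI) auto
    show "c \<cdot>\<^sub>m (K - KT) + - (c \<cdot>\<^sub>m (1\<^sub>m n + c \<cdot>\<^sub>m KU)) = 0\<^sub>m n n"
    proof (intro eq_matI)
      fix i j assume ij: "i < dim_row (0\<^sub>m n n :: real mat)" "j < dim_col (0\<^sub>m n n :: real mat)"
      then have "K $$ (i,j) - KT $$ (i,j) - (if i = j then 1 else 0) - c * KU $$ (i,j) = 0"
        using Hi[of i j] by auto
      then have "c * (K $$ (i,j) - KT $$ (i,j) - (if i = j then 1 else 0) - c * KU $$ (i,j)) = 0" by simp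
      then show "(c \<cdot>\<^sub>m (K - KT) + - (c \<cdot>\<^sub>m (1\<^sub>m n + c \<cdot>\<^sub>m KU))) $$ (i,j) = 0\<^sub>m n n $$ (i,j)"
        using ij K KT KU by (auto simp: algebra_simps)
    qed (use K KU in auto)
    show "- (c \<cdot>\<^sub>m KU) + (1\<^sub>m n + c \<cdot>\<^sub>m KU) = 1\<^sub>m n" using KU by (intro eq_matI) auto
  qed
  also have "\<dots> = 1\<^sub>m (n+n)" by simp
  finally show ?thesis using Nc nN by blast
qed

lemma BL1: assumes T: "(T::real mat) \<in> carrier_mat n n" and U: "U \<in> carrier_mat n n"
  and N: "N \<in> carrier_mat (n+n) (n+n)" and nN: "nn N"
  and NW: "N * (1\<^sub>m (n+n) - four_block_mat T U (c \<cdot>\<^sub>m 1\<^sub>m n) (0\<^sub>m n n)) = 1\<^sub>m (n+n)"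
  shows "\<exists>K \<in> carrier_mat n n. nn K \<and> K * (1\<^sub>m n - (T + c \<cdot>\<^sub>m U)) = 1\<^sub>m n"
proof -
  obtain N1 N2 N3 N4 where sp: "split_block N n n = (N1,N2,N3,N4)" by (metis prod_cases4)
  note s = split_block[OF sp, of n n] 
  have N1: "N1 \<in> carrier_mat n n" and N2: "N2 \<in> carrier_mat n n" and N3: "N3 \<in> carrier_mat n n"
    and N4: "N4 \<in> carrier_mat n n" and Ne: "N = four_block_mat N1 N2 N3 N4" using s N by auto
  have "1\<^sub>m (n+n) = N * four_block_mat (1\<^sub>m n - T) (- U) (- (c \<cdot>\<^sub>m 1\<^sub>m n)) (1\<^sub>m n)"
    using NW IW[OF T U] by simp
  also have "\<dots> = four_block_mat (N1 * (1\<^sub>m n - T) + N2 * (- (c \<cdot>\<^sub>m 1\<^sub>m n))) (N1 * (- U) + N2 * 1\<^sub>m n)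
     (N3 * (1\<^sub>m n - T) + N4 * (- (c \<cdot>\<^sub>m 1\<^sub>m n))) (N3 * (- U) + N4 * 1\<^sub>m n)"
    unfolding Ne by (rule mult_four_block_mat) (use N1 N2 N3 N4 T U in auto)
  finally have eq: "four_block_mat (1\<^sub>m n) (0\<^sub>m n n) (0\<^sub>m n n) (1\<^sub>m n) = \<dots>" by simp
  have e1: "1\<^sub>m n = N1 * (1\<^sub>m n - T) + N2 * (- (c \<cdot>\<^sub>m 1\<^sub>m n))"
    and e2: "0\<^sub>m n n = N1 * (- U) + N2 * 1\<^sub>m n"
    by (rule fb_eq[OF _ _ _ _ _ _ _ _ eq]; use N1 N2 N3 N4 T U in auto)+
  define KT where "KT = N1 * T"
  define KU where "KU = N1 * U"
  have KT: "KT \<in> carrier_mat n n" and KU: "KU \<in> carrier_mat n n" unfolding KT_def KU_def using N1 T U by auto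
  have e1': "1\<^sub>m n = N1 - KT + - (c \<cdot>\<^sub>m N2)" using e1 unfolding pm1[OF N1 T] pm2[OF N2] KT_def .
  have e2': "0\<^sub>m n n = - KU + N2" using e2 N2 unfolding KU_def pm3[OF N1 U] by simp
  have N2e: "N2 $$ (i,j) = KU $$ (i,j)" if "i < n" "j < n" for i j
    using arg_cong[OF e2', of "\<lambda>M. M $$ (i,j)"] that KU N2 by auto
  have "N1 * (1\<^sub>m n - (T + c \<cdot>\<^sub>m U)) = N1 - (KT + c \<cdot>\<^sub>m KU)" using pe[OF N1 T U] unfolding KT_def KU_def .
  also have "\<dots> = 1\<^sub>m n"
  proof (rule eq_matI)
    fix i j assume ij: "i < dim_row (1\<^sub>m n :: real mat)" "j < dim_col (1\<^sub>m n :: real mat)"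
    with arg_cong[OF e1', of "\<lambda>M. M $$ (i,j)"] N2e[of i j] N1 N2 KT KU
    show "(N1 - (KT + c \<cdot>\<^sub>m KU)) $$ (i,j) = 1\<^sub>m n $$ (i,j)" by auto
  qed (use N1 KT KU in auto)
  finally have "N1 * (1\<^sub>m n - (T + c \<cdot>\<^sub>m U)) = 1\<^sub>m n" .
  moreover have "nn N1" using nN N1 unfolding Ne nn_def
  proof (intro allI impI)
    fix i j assume "\<forall>i<dim_row (four_block_mat N1 N2 N3 N4). \<forall>j<dim_col (four_block_mat N1 N2 N3 N4). 0 \<le> four_block_mat N1 N2 N3 N4 $$ (i, j)"
      and "N1 \<in> carrier_mat n n" "i < dim_row N1" "j < dim_col N1"
    then show "0 \<le> N1 $$ (i,j)" using N4 by (metis index_mat_four_block(1,2,3) trans_less_add1)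
  qed
  ultimately show ?thesis using N1 by blast
qed



lemma det_one_minus: assumes X: "X \<in> carrier_mat n n" and sp: "1 \<notin> rspec X"
  shows "det (1\<^sub>m n - X) \<noteq> 0"
proof
  have IX: "1\<^sub>m n - X \<in> carrier_mat n n" using X by simp
  assume "det (1\<^sub>m n - X) = 0"
  from this[unfolded det_0_iff_vec_prod_zero_field[OF IX]] obtain v where
    v: "v \<in> carrier_vec n" "v \<noteq> 0\<^sub>v n" and e: "(1\<^sub>m n - X) *\<^sub>v v = 0\<^sub>v n" by auto
  have "(1\<^sub>m n - X) *\<^sub>v v = v - X *\<^sub>v v"
    using minus_mult_distrib_mat_vec[OF one_carrier_mat X v(1)] v by simp
  with e have z: "v - X *\<^sub>v v = 0\<^sub>v n" by simp
  have zi: "(v - X *\<^sub>v v) $ i = 0" if "i < n" for i using z that by simp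
  have "X *\<^sub>v v = 1 \<cdot>\<^sub>v v" using v X zi by (intro eq_vecI) auto
  from rspec_ev[OF X v this] sp show False by simp
qed

lemma nn_of_le: "0\<^sub>m n n \<le> B \<Longrightarrow> nn B" unfolding nn_def less_eq_mat_def by auto

lemma nn_negI: assumes "B \<le> 0\<^sub>m n n" shows "nn (- B)"
  using assms unfolding nn_def less_eq_mat_def by auto

lemma nn_minus: assumes X: "X \<in> carrier_mat n n" and Y: "Y \<in> carrier_mat n n" and "nn X" "nn (- Y)"
  shows "nn (X - Y)" using assms unfolding nn_def by auto (meson order.trans)

lemma nn_neg_mult: assumes X: "(X::real mat) \<in> carrier_mat n n" and Y: "Y \<in> carrier_mat n n"
  and "nn (- X)" "nn Y" shows "nn (- (X * Y))"
proof -
  have "- (X * Y) = (- X) * Y" using X Y by simp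
  then show ?thesis using nn_mult[of "- X" n Y] assms by simp
qed

lemma nn_mult_neg: assumes X: "(X::real mat) \<in> carrier_mat n n" and Y: "Y \<in> carrier_mat n n"
  and "nn X" "nn (- Y)" shows "nn (- (X * Y))"
proof -
  have "- (X * Y) = X * (- Y)" using X Y by simp
  then show ?thesis using nn_mult[of X n "- Y"] assms by simp
qed

lemma nn_neg_neg: assumes X: "(X::real mat) \<in> carrier_mat n n" and Y: "Y \<in> carrier_mat n n"
  and "nn (- X)" "nn (- Y)" shows "nn (X * Y)"
proof -
  have "X * Y = (- X) * (- Y)" using X Y by simp
  then show ?thesis using nn_mult[of "- X" n "- Y"] assms by simp
qed



lemma assoc4: assumes "A \<in> carrier_mat n n" "B \<in> carrier_mat n n" "C \<in> carrier_mat n n" "D \<in> carrier_mat n n"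
  shows "A * B * C * D = A * (B * (C * (D :: real mat)))"
proof -
  have "A * B * C * D = (A * B) * (C * D)" using assms by (intro assoc_mult_mat) auto
  also have "\<dots> = A * (B * (C * D))" using assms by (intro assoc_mult_mat) auto
  finally show ?thesis .
qed

lemma idents: fixes A P1 R1 S1 P2 R2 S2 P1i P2i :: "real mat"
  assumes c: "A \<in> carrier_mat n n" "P1 \<in> carrier_mat n n" "R1 \<in> carrier_mat n n"
      "S1 \<in> carrier_mat n n" "P2 \<in> carrier_mat n n" "R2 \<in> carrier_mat n n"
      "S2 \<in> carrier_mat n n" "P1i \<in> carrier_mat n n" "P2i \<in> carrier_mat n n"
  and A1: "A = P1 - R1 + S1" and A2: "A = P2 - R2 + S2" and i1: "P1i * P1 = 1\<^sub>m n" and i2: "P2i * P2 = 1\<^sub>m n"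
  shows "P2i * ((1\<^sub>m n - S2 * P1i) * A) = 1\<^sub>m n - ((P2i * R2 - P2i * S2 * P1i * R1) + P2i * S2 * P1i * S1)"
    "P2i * ((1\<^sub>m n + R2 * P1i) * A) = 1\<^sub>m n - ((P2i * R2 * P1i * R1 - P2i * S2) + - (P2i * R2 * P1i * S1))"
    "P2i * (R2 - S2 * P1i * R1) = P2i * R2 - P2i * S2 * P1i * R1"
    "P2i * (R2 * P1i * R1 - S2) = P2i * R2 * P1i * R1 - P2i * S2"
proof -
  note d = mult_minus_distrib_mat[of _ n n _ n] minus_mult_distrib_mat[of _ n n _ _ n]
     add_mult_distrib_mat[of _ n n _ _ n] mult_add_distrib_mat[of _ n n _ n]
  have a: "P2i * A = 1\<^sub>m n - P2i * R2 + P2i * S2" unfolding A2 using c i2 by (simp add: d)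
  have b: "P1i * A = 1\<^sub>m n - P1i * R1 + P1i * S1" unfolding A1 using c i1 by (simp add: d)
  have "P2i * ((1\<^sub>m n - S2 * P1i) * A) = P2i * A - P2i * (S2 * (P1i * A))"
    using c by (simp add: d)
  also have "\<dots> = (1\<^sub>m n - P2i * R2 + P2i * S2) - P2i * (S2 * (1\<^sub>m n - P1i * R1 + P1i * S1))"
    unfolding a b ..
  also have "\<dots> = (1\<^sub>m n - P2i * R2 + P2i * S2) - (P2i * S2 - P2i * (S2 * (P1i * R1)) + P2i * (S2 * (P1i * S1)))"
    using c by (simp add: d)
  also have "\<dots> = 1\<^sub>m n - ((P2i * R2 - P2i * S2 * P1i * R1) + P2i * S2 * P1i * S1)"
    unfolding assoc4[OF c(9,7,8,3)] assoc4[OF c(9,7,8,4)] assoc4[OF c(9,6,8,3)] assoc4[OF c(9,6,8,4)]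
    using c by (intro eq_matI) auto
  finally show "P2i * ((1\<^sub>m n - S2 * P1i) * A) = 1\<^sub>m n - ((P2i * R2 - P2i * S2 * P1i * R1) + P2i * S2 * P1i * S1)" .
  have "P2i * ((1\<^sub>m n + R2 * P1i) * A) = P2i * A + P2i * (R2 * (P1i * A))"
    using c by (simp add: d)
  also have "\<dots> = (1\<^sub>m n - P2i * R2 + P2i * S2) + P2i * (R2 * (1\<^sub>m n - P1i * R1 + P1i * S1))"
    unfolding a b ..
  also have "\<dots> = (1\<^sub>m n - P2i * R2 + P2i * S2) + (P2i * R2 - P2i * (R2 * (P1i * R1)) + P2i * (R2 * (P1i * S1)))"
    using c by (simp add: d)
  also have "\<dots> = 1\<^sub>m n - ((P2i * R2 * P1i * R1 - P2i * S2) + - (P2i * R2 * P1i * S1))"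
    unfolding assoc4[OF c(9,7,8,3)] assoc4[OF c(9,7,8,4)] assoc4[OF c(9,6,8,3)] assoc4[OF c(9,6,8,4)]
    using c by (intro eq_matI) auto
  finally show "P2i * ((1\<^sub>m n + R2 * P1i) * A) = 1\<^sub>m n - ((P2i * R2 * P1i * R1 - P2i * S2) + - (P2i * R2 * P1i * S1))" .
  show "P2i * (R2 - S2 * P1i * R1) = P2i * R2 - P2i * S2 * P1i * R1"
    unfolding assoc4[OF c(9,7,8,3)] using c by (simp add: d)
  show "P2i * (R2 * P1i * R1 - S2) = P2i * R2 * P1i * R1 - P2i * S2"
    unfolding assoc4[OF c(9,6,8,3)] using c by (simp add: d)
qed



lemma idx_minus: "A \<in> carrier_mat n m \<Longrightarrow> B \<in> carrier_mat n m \<Longrightarrow> i < n \<Longrightarrow> j < m \<Longrightarrow>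
  (A - B) $$ (i,j) = A $$ (i,j) - B $$ (i,j)" by auto

theorem corollary3p20:
  fixes n :: nat and A P1 R1 S1 P2 R2 S2 :: "real mat"
  assumes n: "0 < n"
    and carr: "A \<in> carrier_mat n n" "P1 \<in> carrier_mat n n" "R1 \<in> carrier_mat n n"
      "S1 \<in> carrier_mat n n" "P2 \<in> carrier_mat n n" "R2 \<in> carrier_mat n n"
      "S2 \<in> carrier_mat n n"
    and mono: "monotone_mat A"
    and spl1: "double_weak_regular_splitting A P1 R1 S1"
    and spl2: "double_regular_splitting A P2 R2 S2"
    and sp1: "1 \<notin> rspec (S2 * minv P1)"
    and sp2: "-1 \<notin> rspec (R2 * minv P1)"
    and Ahat: "0\<^sub>m n n \<le> minv ((1\<^sub>m n - S2 * minv P1) * A)"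
    and Acal: "0\<^sub>m n n \<le> minv ((1\<^sub>m n + R2 * minv P1) * A)"
    and cmpR: "minv P2 * (R2 - S2 * minv P1 * R1) \<le> minv P2 * (R2 * minv P1 * R1 - S2)"
    and cmpA: "minv P2 * ((1\<^sub>m n - S2 * minv P1) * A) \<le> minv P2 * ((1\<^sub>m n + R2 * minv P1) * A)"
  shows "rrho (four_block_mat (minv P2 * R2 * minv P1 * R1 - minv P2 * S2)
                              (- (minv P2 * R2 * minv P1 * S1))
                              (1\<^sub>m n) (0\<^sub>m n n))
           \<le> rrho (four_block_mat (minv P2 * R2 - minv P2 * S2 * minv P1 * R1)
                                 (minv P2 * S2 * minv P1 * S1)
                                 (1\<^sub>m n) (0\<^sub>m n n))
       \<and> rrho (four_block_mat (minv P2 * R2 - minv P2 * S2 * minv P1 * R1)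
                              (minv P2 * S2 * minv P1 * S1)
                              (1\<^sub>m n) (0\<^sub>m n n)) < 1"
proof -
  note cA = carr(1) and cP1 = carr(2) and cR1 = carr(3) and cS1 = carr(4)
    and cP2 = carr(5) and cR2 = carr(6) and cS2 = carr(7)
  from spl1 have A1: "A = P1 - R1 + S1" and invP1: "invertible_mat P1"
    and P1nn: "0\<^sub>m n n \<le> minv P1" and P1R1: "0\<^sub>m n n \<le> minv P1 * R1"
    and P1S1: "minv P1 * S1 \<le> 0\<^sub>m n n"
    unfolding double_weak_regular_splitting_def using carr by auto
  from spl2 have A2: "A = P2 - R2 + S2" and invP2: "invertible_mat P2"
    and P2nn: "0\<^sub>m n n \<le> minv P2" and R2nn: "0\<^sub>m n n \<le> R2"
    and S2np: "S2 \<le> 0\<^sub>m n n"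
    unfolding double_regular_splitting_def using carr by auto
  define P1i where "P1i = minv P1"
  define P2i where "P2i = minv P2"
  note mp1 = minv_props[OF cP1 invP1, folded P1i_def]
  note mp2 = minv_props[OF cP2 invP2, folded P2i_def]
  have cP1i: "P1i \<in> carrier_mat n n" using mp1 by simp
  have cP2i: "P2i \<in> carrier_mat n n" using mp2 by simp
  have nP1i: "nn P1i" using nn_of_le[OF P1nn] unfolding P1i_def .
  have nP2i: "nn P2i" using nn_of_le[OF P2nn] unfolding P2i_def .
  have nR2: "nn R2" using nn_of_le[OF R2nn] .
  have nS2: "nn (- S2)" using nn_negI[OF S2np] .
  have nP1R1: "nn (P1i * R1)" using nn_of_le[OF P1R1] unfolding P1i_def .
  have nP1S1: "nn (- (P1i * S1))" using nn_negI[OF P1S1] unfolding P1i_def .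
  have cP1R1: "P1i * R1 \<in> carrier_mat n n" and cP1S1: "P1i * S1 \<in> carrier_mat n n"
    and cP2S2: "P2i * S2 \<in> carrier_mat n n" and cP2R2: "P2i * R2 \<in> carrier_mat n n"
    using cP1i cP2i carr by auto
  define Th where "Th = P2i * R2 - P2i * S2 * P1i * R1"
  define Uh where "Uh = P2i * S2 * P1i * S1"
  define Tc where "Tc = P2i * R2 * P1i * R1 - P2i * S2"
  define Uc where "Uc = - (P2i * R2 * P1i * S1)"
  define W where "W = four_block_mat Th Uh (1\<^sub>m n) (0\<^sub>m n n)"
  define Wc where "Wc = four_block_mat Tc Uc (1\<^sub>m n) (0\<^sub>m n n)"
  have cTh: "Th \<in> carrier_mat n n" and cUh: "Uh \<in> carrier_mat n n"
    and cTc: "Tc \<in> carrier_mat n n" and cUc: "Uc \<in> carrier_mat n n"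
    unfolding Th_def Uh_def Tc_def Uc_def using cP1i cP2i carr by auto
  have cW: "W \<in> carrier_mat (n+n) (n+n)" and cWc: "Wc \<in> carrier_mat (n+n) (n+n)"
    unfolding W_def Wc_def using cTh cTc by auto
  have as1: "P2i * S2 * P1i * R1 = (P2i * S2) * (P1i * R1)"
    using assoc4[OF cP2i cS2 cP1i cR1] assoc_mult_mat[OF cP2i cS2 cP1R1] by simp
  have as2: "P2i * S2 * P1i * S1 = (P2i * S2) * (P1i * S1)"
    using assoc4[OF cP2i cS2 cP1i cS1] assoc_mult_mat[OF cP2i cS2 cP1S1] by simp
  have as3: "P2i * R2 * P1i * R1 = (P2i * R2) * (P1i * R1)"
    using assoc4[OF cP2i cR2 cP1i cR1] assoc_mult_mat[OF cP2i cR2 cP1R1] by simp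
  have as4: "P2i * R2 * P1i * S1 = (P2i * R2) * (P1i * S1)"
    using assoc4[OF cP2i cR2 cP1i cS1] assoc_mult_mat[OF cP2i cR2 cP1S1] by simp
  have nP2S2: "nn (- (P2i * S2))" using nn_mult_neg[OF cP2i cS2 nP2i nS2] .
  have nP2R2: "nn (P2i * R2)" using nn_mult[OF cP2i cR2 nP2i nR2] .
  have nTh: "nn Th" unfolding Th_def as1
    by (rule nn_minus[of _ n]) (use cP2R2 cP2S2 cP1R1 nP2R2 nn_neg_mult[OF cP2S2 cP1R1 nP2S2 nP1R1] in auto)
  have nUh: "nn Uh" unfolding Uh_def as2 using nn_neg_neg[OF cP2S2 cP1S1 nP2S2 nP1S1] .
  have nTc: "nn Tc" unfolding Tc_def as3
    by (rule nn_minus[of _ n]) (use cP2R2 cP2S2 cP1R1 nP2S2 nn_mult[OF cP2R2 cP1R1 nP2R2 nP1R1] in auto)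
  have nUc: "nn Uc" unfolding Uc_def as4 using nn_mult_neg[OF cP2R2 cP1S1 nP2R2 nP1S1] .
  note id = idents[OF carr cP1i cP2i A1 A2 mp1(3) mp2(3), folded Th_def Uh_def Tc_def Uc_def]
  have ThTc: "Th $$ (i,j) \<le> Tc $$ (i,j)" if "i < n" "j < n" for i j
    using cmpR unfolding P1i_def[symmetric] P2i_def[symmetric] id(3,4) less_eq_mat_def
    using that cTc by auto
  have sumc0: "\<forall>i<n. \<forall>j<n. - Th $$ (i, j) - Uh $$ (i, j) \<le> - Tc $$ (i, j) - Uc $$ (i, j)"
    using cmpA unfolding P1i_def[symmetric] P2i_def[symmetric] id(1,2) less_eq_mat_def
    using cTc cUc cTh cUh by auto
  have sumc: "Tc $$ (i,j) + Uc $$ (i,j) \<le> Th $$ (i,j) + Uh $$ (i,j)" if "i < n" "j < n" for i j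
  proof -
    have "- Th $$ (i, j) - Uh $$ (i, j) \<le> - Tc $$ (i, j) - Uc $$ (i, j)" using sumc0 that by blast
    then show ?thesis by linarith
  qed
  define Ah where "Ah = (1\<^sub>m n - S2 * P1i) * A"
  have cAh: "Ah \<in> carrier_mat n n" unfolding Ah_def using cA cS2 cP1i by auto
  from mono have invA: "invertible_mat A" unfolding monotone_mat_def by auto
  note mpA = minv_props[OF cA invA]
  have dA: "det A \<noteq> 0"
  proof
    assume "det A = 0"
    then have "det (A * minv A) = 0" using det_mult[OF cA mpA(1)] by simp
    then show False using mpA(2) by simp
  qed
  have cSP: "S2 * P1i \<in> carrier_mat n n" using cS2 cP1i by simp
  have dX: "det (1\<^sub>m n - S2 * P1i) \<noteq> 0" using det_one_minus[OF cSP] sp1 unfolding P1i_def by simp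
  have "det Ah \<noteq> 0" unfolding Ah_def using det_mult[OF _ cA, of "1\<^sub>m n - S2 * P1i"] cSP dX dA by simp
  from det_non_zero_imp_unit[OF cAh this, of "()"]
  obtain Ahi where cAhi: "Ahi \<in> carrier_mat n n" and AhAhi: "Ah * Ahi = 1\<^sub>m n"
    unfolding Units_def ring_mat_def by auto
  have "minv Ah = Ahi" using minv_eq[OF cAh cAhi AhAhi] .
  hence nAhi: "nn Ahi" using nn_of_le[OF Ahat] unfolding Ah_def P1i_def by simp
  define B where "B = Th + Uh"
  have cB: "B \<in> carrier_mat n n" unfolding B_def using cTh cUh by simp
  have nB: "nn B" unfolding B_def using nn_add[OF cTh cUh nTh nUh] .
  have IB: "1\<^sub>m n - B = P2i * Ah" unfolding B_def Ah_def using id(1) by simp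
  have rB: "rrho B < 1"
  proof (rule Varga[OF cB n nB cP2i nP2i cP2 mp2(3)])
    fix k i l assume i: "i < n" and l: "l < n"
    have Ps: "psum B k \<in> carrier_mat n n" using psum_carrier[OF cB] .
    have Bk: "B ^\<^sub>m k \<in> carrier_mat n n" using cB by simp
    have "psum B k * P2i = psum B k * P2i * (Ah * Ahi)" using AhAhi Ps cP2i by simp
    also have "\<dots> = psum B k * (P2i * Ah) * Ahi"
      by (simp only: assoc_mult_mat[OF Ps cP2i mult_carrier_mat[OF cAh cAhi]]
        assoc_mult_mat[OF Ps mult_carrier_mat[OF cP2i cAh] cAhi] assoc_mult_mat[OF cP2i cAh cAhi])
    also have "psum B k * (P2i * Ah) = 1\<^sub>m n - B ^\<^sub>m k" unfolding IB[symmetric] using psum_mult[OF cB] .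
    also have "(1\<^sub>m n - B ^\<^sub>m k) * Ahi = Ahi - B ^\<^sub>m k * Ahi"
      using minus_mult_distrib_mat[OF one_carrier_mat Bk cAhi] cAhi by simp
    finally have e: "psum B k * P2i = Ahi - B ^\<^sub>m k * Ahi" .
    have "0 \<le> (B ^\<^sub>m k * Ahi) $$ (i,l)" using nn_mult[OF Bk cAhi nn_pow[OF cB nB] nAhi] i l Bk cAhi
      unfolding nn_def by auto
    moreover have "(Ahi - B ^\<^sub>m k * Ahi) $$ (i,l) = Ahi $$ (i,l) - (B ^\<^sub>m k * Ahi) $$ (i,l)"
      using idx_minus[OF cAhi mult_carrier_mat[OF Bk cAhi] i l] .
    ultimately show "(psum B k * P2i) $$ (i,l) \<le> Ahi $$ (i,l)" unfolding e by linarith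
  qed
  from H2[OF cB n nB rB] obtain K where K: "K \<in> carrier_mat n n" "K * (1\<^sub>m n - B) = 1\<^sub>m n" "nn K" by blast
  have one_s: "1 \<cdot>\<^sub>m Uh = Uh" using cUh by (intro eq_matI) auto
  have "K * (1\<^sub>m n - (Th + 1 \<cdot>\<^sub>m Uh)) = 1\<^sub>m n" using K(2) unfolding B_def one_s .
  from BL2[OF cTh cUh K(1) this K(3) nUh] obtain N where
    N: "N \<in> carrier_mat (n+n) (n+n)" "nn N"
    "N * (1\<^sub>m (n+n) - four_block_mat Th Uh (1 \<cdot>\<^sub>m 1\<^sub>m n) (0\<^sub>m n n)) = 1\<^sub>m (n+n)" by auto
  have "1 \<cdot>\<^sub>m 1\<^sub>m n = (1\<^sub>m n :: real mat)" by (intro eq_matI) auto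
  with N(3) have N3: "N * (1\<^sub>m (n+n) - W) = 1\<^sub>m (n+n)" unfolding W_def by simp
  have nW: "nn W" unfolding W_def by (rule nn_fb[of _ n]) (use cTh cUh nTh nUh nn_one nn_zero in auto)
  have nn0: "0 < n + n" using n by simp
  have rW: "rrho W < 1" using G2[OF cW nn0 N(1) nW N(2) N3] .
  have "rrho Wc \<le> rrho W"
  proof (rule ccontr)
    assume "\<not> rrho Wc \<le> rrho W"
    hence lt: "rrho W < rrho Wc" by simp
    have r0: "0 \<le> rrho W" using rrho_max(3)[OF cW nn0] .
    define t where "t = (rrho W + min (rrho Wc) 1) / 2"
    have t: "0 < t" "rrho W < t" "t < rrho Wc" "t \<le> 1"
      using lt rW r0 unfolding t_def by (auto simp: min_def)
    define c where "c = 1 / t"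
    have c: "0 < c" "1 \<le> c" using t unfolding c_def by auto
    have ct: "c * t = 1" using t unfolding c_def by simp
    have cWs: "c \<cdot>\<^sub>m W = four_block_mat (c \<cdot>\<^sub>m Th) (c \<cdot>\<^sub>m Uh) (c \<cdot>\<^sub>m 1\<^sub>m n) (0\<^sub>m n n)"
      unfolding W_def using smult_four_block_mat[OF cTh cUh one_carrier_mat zero_carrier_mat, of c] by simp
    have "rrho (c \<cdot>\<^sub>m W) = c * rrho W" using rrho_smult[OF cW nn0 c(1)] .
    also have "\<dots> < c * t" using t c by simp
    finally have rcW: "rrho (c \<cdot>\<^sub>m W) < 1" using ct by simp
    have ccW: "c \<cdot>\<^sub>m W \<in> carrier_mat (n+n) (n+n)" using cW by simp
    from H2[OF ccW nn0 nn_smult[OF _ nW] rcW] c obtain N1 where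
      N1: "N1 \<in> carrier_mat (n+n) (n+n)" "N1 * (1\<^sub>m (n+n) - c \<cdot>\<^sub>m W) = 1\<^sub>m (n+n)" "nn N1" by auto
    have cTh': "c \<cdot>\<^sub>m Th \<in> carrier_mat n n" and cUh': "c \<cdot>\<^sub>m Uh \<in> carrier_mat n n"
      and cTc': "c \<cdot>\<^sub>m Tc \<in> carrier_mat n n" and cUc': "c \<cdot>\<^sub>m Uc \<in> carrier_mat n n"
      using cTh cUh cTc cUc by auto
    from BL1[OF cTh' cUh' N1(1) N1(3) N1(2)[unfolded cWs]] obtain K1 where
      K1: "K1 \<in> carrier_mat n n" "nn K1" "K1 * (1\<^sub>m n - (c \<cdot>\<^sub>m Th + c \<cdot>\<^sub>m (c \<cdot>\<^sub>m Uh))) = 1\<^sub>m n" by auto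
    define Bh where "Bh = c \<cdot>\<^sub>m Th + c \<cdot>\<^sub>m (c \<cdot>\<^sub>m Uh)"
    define Bc where "Bc = c \<cdot>\<^sub>m Tc + c \<cdot>\<^sub>m (c \<cdot>\<^sub>m Uc)"
    have cBh: "Bh \<in> carrier_mat n n" and cBc: "Bc \<in> carrier_mat n n"
      unfolding Bh_def Bc_def using cTh cUh cTc cUc by auto
    have nBh: "nn Bh" unfolding Bh_def
      using c nTh nUh cTh cUh unfolding nn_def by auto
    have nBc: "nn Bc" unfolding Bc_def
      using c nTc nUc cTc cUc unfolding nn_def by auto
    have rBh: "rrho Bh < 1" using G2[OF cBh n K1(1) nBh K1(2) K1(3)[folded Bh_def]] .
    have BcBh: "Bc \<le> Bh" unfolding less_eq_mat_def
    proof (intro conjI allI impI)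
      fix i j assume i: "i < dim_row Bh" and j: "j < dim_col Bh"
      hence i: "i < n" and j: "j < n" using cBh by auto
      have d: "0 \<le> Tc $$ (i,j) - Th $$ (i,j)" using ThTc[OF i j] by simp
      have u: "Uc $$ (i,j) \<le> Uh $$ (i,j) - (Tc $$ (i,j) - Th $$ (i,j))" using sumc[OF i j] by simp
      have cc: "0 \<le> c * c - c" using c by (simp add: mult_le_cancel_left1)
      have "c * c * Uc $$ (i,j) \<le> c * c * (Uh $$ (i,j) - (Tc $$ (i,j) - Th $$ (i,j)))"
        using u c by (intro mult_left_mono) auto
      moreover have "0 \<le> (c * c - c) * (Tc $$ (i,j) - Th $$ (i,j))" using cc d by simp
      ultimately have "c * Tc $$ (i,j) + c * c * Uc $$ (i,j) \<le> c * Th $$ (i,j) + c * c * Uh $$ (i,j)"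
        by (simp add: algebra_simps)
      then show "Bc $$ (i,j) \<le> Bh $$ (i,j)" unfolding Bh_def Bc_def using i j cTh cUh cTc cUc
        by (simp add: mult.assoc)
    qed (use cBh cBc in auto)
    have rBc: "rrho Bc < 1" using Mono[OF cBc cBh n nBc BcBh rBh] .
    from H2[OF cBc n nBc rBc] obtain K2 where
      K2: "K2 \<in> carrier_mat n n" "K2 * (1\<^sub>m n - Bc) = 1\<^sub>m n" "nn K2" by blast
    have nUc': "nn (c \<cdot>\<^sub>m Uc)" using nn_smult[OF _ nUc] c by simp
    from BL2[OF cTc' cUc' K2(1) K2(2)[unfolded Bc_def] K2(3) nUc'] c obtain N2 where
      N2: "N2 \<in> carrier_mat (n+n) (n+n)" "nn N2"
      "N2 * (1\<^sub>m (n+n) - four_block_mat (c \<cdot>\<^sub>m Tc) (c \<cdot>\<^sub>m Uc) (c \<cdot>\<^sub>m 1\<^sub>m n) (0\<^sub>m n n)) = 1\<^sub>m (n+n)"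
      by auto
    have cWcs: "c \<cdot>\<^sub>m Wc = four_block_mat (c \<cdot>\<^sub>m Tc) (c \<cdot>\<^sub>m Uc) (c \<cdot>\<^sub>m 1\<^sub>m n) (0\<^sub>m n n)"
      unfolding Wc_def using smult_four_block_mat[OF cTc cUc one_carrier_mat zero_carrier_mat, of c] by simp
    have nWc: "nn Wc" unfolding Wc_def by (rule nn_fb[of _ n]) (use cTc cUc nTc nUc nn_one nn_zero in auto)
    have ccWc: "c \<cdot>\<^sub>m Wc \<in> carrier_mat (n+n) (n+n)" using cWc by simp
    have "rrho (c \<cdot>\<^sub>m Wc) < 1"
      using G2[OF ccWc nn0 N2(1) nn_smult[OF _ nWc] N2(2) N2(3)[folded cWcs]] c by simp
    hence "c * rrho Wc < 1" using rrho_smult[OF cWc nn0 c(1)] by simp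
    hence "c * rrho Wc < c * t" using ct by simp
    hence "rrho Wc < t" using c by simp
    with t show False by simp
  qed
  with rW have "rrho Wc \<le> rrho W \<and> rrho W < 1" by simp
  then show ?thesis unfolding W_def Wc_def Th_def Uh_def Tc_def Uc_def P1i_def P2i_def .
qed

end
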